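(* Let $A$ be a commutative noetherian local ring, let $x,y\in A$ be an exact pair of zero divisors, and let $a\in A$. Then the sequence of free $A$-modules \[\boldsymbol{F}=\ \cdots\to A^2\xrightarrow{\gamma_a}A^2\xrightarrow{\eta_a}A^2\xrightarrow{\gamma_a}A^2\xrightarrow{\eta_a}\cdots\] is an exact complex. Moreover, with $\varphi=\begin{pmatrix}0&1\\-1&0\end{pmatrix}$ one has $\varphi\gamma_a^t=\eta_a\varphi$ and $\varphi\eta_a^t=\gamma_a\varphi$ (where ${}^t$ denotes transposition), so that $\varphi$ in each degree gives an isomorphism of complexes $\operatorname{Hom}_A(\boldsymbol{F},A)\xrightarrow{\cong}\boldsymbol{F}$, where $\operatorname{Hom}_A(A^2,A)$ is identified with $A^2$ so that the dual of a matrix is its transpose. In particular, $\operatorname{Hom}_A(\boldsymbol{F},A)$ is exact.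
   Context: Two non-units $x,y\in A$ form an exact pair of zero divisors if $\operatorname{Ann}_A(x)=(y)$ and $\operatorname{Ann}_A(y)=(x)$. For $a\in A$, $\gamma_a=\begin{pmatrix} x & a\\ 0 & y\end{pmatrix}$ and $\eta_a=\begin{pmatrix} y & -a\\ 0 & x\end{pmatrix}$, viewed as $A$-linear maps $A^2\to A^2$ acting on column vectors by left multiplication. *)

theory Defs
  imports "HOL-Analysis.Analysis"
begin

definition is_ideal :: "'a::comm_ring_1 set \<Rightarrow> bool" where
  "is_ideal I \<longleftrightarrow> 0 \<in> I \<and> (\<forall>u\<in>I. \<forall>v\<in>I. u + v \<in> I) \<and> (\<forall>r. \<forall>u\<in>I. r * u \<in> I)"

definition gen_ideal :: "'a::comm_ring_1 set \<Rightarrow> 'a set" where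
  "gen_ideal S = {u. \<exists>T c. finite T \<and> T \<subseteq> S \<and> u = (\<Sum>s\<in>T. c s * s)}"

definition noetherian_ring :: "'a::comm_ring_1 itself \<Rightarrow> bool" where
  "noetherian_ring _ \<longleftrightarrow> (\<forall>I::'a set. is_ideal I \<longrightarrow> (\<exists>S. finite S \<and> I = gen_ideal S))"

definition maximal_ideal :: "'a::comm_ring_1 set \<Rightarrow> bool" where
  "maximal_ideal m \<longleftrightarrow> is_ideal m \<and> m \<noteq> UNIV \<and>
     (\<forall>J. is_ideal J \<and> m \<subseteq> J \<longrightarrow> J = m \<or> J = UNIV)"

definition local_ring :: "'a::comm_ring_1 itself \<Rightarrow> bool" where
  "local_ring _ \<longleftrightarrow> (\<exists>!m::'a set. maximal_ideal m)"

definition Ann :: "'a::comm_ring_1 \<Rightarrow> 'a set" where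
  "Ann x = {z. z * x = 0}"

definition exact_pair :: "'a::comm_ring_1 \<Rightarrow> 'a \<Rightarrow> bool" where
  "exact_pair x y \<longleftrightarrow> \<not> x dvd 1 \<and> \<not> y dvd 1 \<and>
     Ann x = gen_ideal {y} \<and> Ann y = gen_ideal {x}"

text \<open>The 2x2 matrices gamma_a, eta_a, phi (rows indexed first; index 1,2 of type 2).\<close>
definition mat2 :: "'a \<Rightarrow> 'a \<Rightarrow> 'a \<Rightarrow> 'a \<Rightarrow> 'a^2^2" where
  "mat2 p q r s = (\<chi> i j. if i = 1 then (if j = 1 then p else q) else (if j = 1 then r else s))"

definition gamma :: "'a::comm_ring_1 \<Rightarrow> 'a \<Rightarrow> 'a \<Rightarrow> 'a^2^2" where
  "gamma x y a = mat2 x a 0 y"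

definition eta :: "'a::comm_ring_1 \<Rightarrow> 'a \<Rightarrow> 'a \<Rightarrow> 'a^2^2" where
  "eta x y a = mat2 y (- a) 0 x"

definition phi :: "'a::comm_ring_1^2^2" where
  "phi = mat2 0 1 (- 1) 0"

definition exact_at :: "'a::comm_ring_1^2^2 \<Rightarrow> 'a^2^2 \<Rightarrow> bool" where
  "exact_at f g \<longleftrightarrow> g ** f = 0 \<and> {v. g *v v = 0} = range (\<lambda>w. f *v w)"

end

theory Submission
  imports Defs
begin

lemma gen1: "gen_ideal {y::'a::comm_ring_1} = {c * y | c. True}"
proof (intro set_eqI iffI)
  fix u assume "u \<in> gen_ideal {y}"
  then obtain T c where "finite T" "T \<subseteq> {y}" "u = (\<Sum>s\<in>T. c s * s)"
    unfolding gen_ideal_def by blast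
  then have "T = {} \<or> T = {y}" by blast
  then show "u \<in> {c * y | c. True}"
  proof
    assume "T = {}" then have "u = 0 * y" using \<open>u = _\<close> by simp
    then show ?thesis by blast
  next
    assume "T = {y}" then have "u = c y * y" using \<open>u = _\<close> by simp
    then show ?thesis by blast
  qed
next
  fix u assume "u \<in> {c * y | c. True}"
  then obtain c where "u = c * y" by blast
  then show "u \<in> gen_ideal {y}" unfolding gen_ideal_def
    by (intro CollectI exI[of _ "{y}"] exI[of _ "\<lambda>_. c"]) auto
qed

lemma ann_ex: "exact_pair x y \<Longrightarrow> z * x = 0 \<Longrightarrow> \<exists>c. z = c * y"
  unfolding exact_pair_def Ann_def gen1 by blast

lemma ann_ey: "exact_pair x y \<Longrightarrow> z * y = 0 \<Longrightarrow> \<exists>c. z = c * x"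
  unfolding exact_pair_def Ann_def gen1 by blast

lemma xy0: "exact_pair x y \<Longrightarrow> x * y = 0"
proof -
  assume "exact_pair x y"
  have "y = 1 * y" by simp
  then have "y \<in> {c * y | c. True}" by blast
  then have "y \<in> Ann x" using \<open>exact_pair x y\<close> unfolding exact_pair_def gen1 by simp
  then show ?thesis by (simp add: Ann_def mult.commute)
qed

lemma two_ne: "(1::2) \<noteq> 2" by simp

lemma mat2_mv1: "(mat2 p q r s *v v) $ 1 = p * v$1 + q * v$2"
  by (simp add: mat2_def matrix_vector_mult_def sum_2)
lemma mat2_mv2: "(mat2 p q r s *v v) $ 2 = r * v$1 + s * v$2"
  by (simp add: mat2_def matrix_vector_mult_def sum_2)

lemma vec2_eq: "(v::'a^2) = w \<longleftrightarrow> v$1 = w$1 \<and> v$2 = w$2"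
  by (simp add: vec_eq_iff forall_2)

lemma mat2_eq: "mat2 p q r s = mat2 p2 q2 r2 s2 \<longleftrightarrow> p = p2 \<and> q = q2 \<and> r = r2 \<and> s = s2"
  by (simp add: mat2_def vec_eq_iff forall_2)

lemma mat2_mult: "mat2 p q r s ** mat2 p2 q2 r2 s2 =
   mat2 (p*p2+q*r2) (p*q2+q* s2) (r*p2+s*r2) (r*q2+s* s2)"
  by (simp add: mat2_def matrix_matrix_mult_def sum_2 vec_eq_iff forall_2)

lemma mat2_zero: "(0::'a::zero^2^2) = mat2 0 0 0 0"
  by (simp add: mat2_def vec_eq_iff forall_2)

lemma mat2_one: "(mat 1::'a::{zero,one}^2^2) = mat2 1 0 0 1"
  by (simp add: mat2_def mat_def vec_eq_iff forall_2)

lemma mat2_tr: "transpose (mat2 p q r s) = mat2 p r q s"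
  by (simp add: mat2_def transpose_def vec_eq_iff forall_2)

lemma vec0_2: "(v::'a::zero^2) = 0 \<longleftrightarrow> v$1 = 0 \<and> v$2 = 0"
  by (simp add: vec_eq_iff forall_2)

lemma in_range2:
  assumes "v$1 = p*w1 + q*w2" "v$2 = r*w1 + s*w2"
  shows "v \<in> range (\<lambda>w. mat2 p q r s *v w)"
proof
  let ?w = "(\<chi> i. if i = 1 then w1 else w2) :: 'a^2"
  show "v = mat2 p q r s *v ?w" using assms
    by (simp add: vec2_eq mat2_mv1 mat2_mv2)
qed simp

theorem lemma3p4:
  fixes x y a :: "'a::comm_ring_1"
  assumes "noetherian_ring TYPE('a)" and "local_ring TYPE('a)"
    and "exact_pair x y"
  shows "exact_at (gamma x y a) (eta x y a) \<and> exact_at (eta x y a) (gamma x y a)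
    \<and> phi ** transpose (gamma x y a) = eta x y a ** phi
    \<and> phi ** transpose (eta x y a) = gamma x y a ** phi
    \<and> invertible (phi :: 'a^2^2)
    \<and> exact_at (transpose (eta x y a)) (transpose (gamma x y a))
    \<and> exact_at (transpose (gamma x y a)) (transpose (eta x y a))"
proof -
  note E = assms(3)
  have xy: "x * y = 0" by (rule xy0[OF E])
  have yx: "y * x = 0" using xy by (simp add: mult.commute)
  have Zex1: "eta x y a ** gamma x y a = 0"
    by (simp add: eta_def gamma_def mat2_mult mat2_zero mat2_eq xy yx algebra_simps)
  have ex1: "exact_at (gamma x y a) (eta x y a)"
    unfolding exact_at_def
  proof (intro conjI set_eqI iffI)
    show "eta x y a ** gamma x y a = 0" by (rule Zex1)
  next
    fix v assume "v \<in> {v. eta x y a *v v = 0}"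
    then have h1: "y * v$1 - a * v$2 = 0" and h2: "x * v$2 = 0"
      by (auto simp: eta_def vec0_2 mat2_mv1 mat2_mv2)
    obtain w2 where w2: "v$2 = w2 * y" using ann_ex[OF E, of "v$2"] h2 by (auto simp: mult.commute)
    have "(v$1 - a * w2) * y = 0" using h1 w2 by (simp add: algebra_simps)
    then obtain w1 where w1: "v$1 - a * w2 = w1 * x" using ann_ey[OF E] by blast
    show "v \<in> range (\<lambda>w. gamma x y a *v w)" unfolding gamma_def
      by (rule in_range2[of _ _ w1 _ w2]) (use w1 w2 in \<open>auto simp: algebra_simps\<close>)
  next
    fix v assume "v \<in> range (\<lambda>w. gamma x y a *v w)"
    then obtain w where "v = gamma x y a *v w" by blast
    then show "v \<in> {v. eta x y a *v v = 0}"
      by (metis (mono_tags) mem_Collect_eq matrix_vector_mul_assoc Zex1 matrix_vector_mult_0)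
  qed
  have Zex2: "gamma x y a ** eta x y a = 0"
    by (simp add: eta_def gamma_def mat2_mult mat2_zero mat2_eq xy yx algebra_simps)
  have ex2: "exact_at (eta x y a) (gamma x y a)"
    unfolding exact_at_def
  proof (intro conjI set_eqI iffI)
    show "gamma x y a ** eta x y a = 0" by (rule Zex2)
  next
    fix v assume "v \<in> {v. gamma x y a *v v = 0}"
    then have h1: "x * v$1 + a * v$2 = 0" and h2: "y * v$2 = 0"
      by (auto simp: gamma_def vec0_2 mat2_mv1 mat2_mv2)
    obtain w2 where w2: "v$2 = w2 * x" using ann_ey[OF E, of "v$2"] h2 by (auto simp: mult.commute)
    have "(v$1 + a * w2) * x = 0" using h1 w2 by (simp add: algebra_simps)
    then obtain w1 where w1: "v$1 + a * w2 = w1 * y" using ann_ex[OF E] by blast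
    show "v \<in> range (\<lambda>w. eta x y a *v w)" unfolding eta_def
      by (rule in_range2[of _ _ w1 _ w2]) (use w1 w2 in \<open>auto simp: algebra_simps\<close>)
  next
    fix v assume "v \<in> range (\<lambda>w. eta x y a *v w)"
    then obtain w where "v = eta x y a *v w" by blast
    then show "v \<in> {v. gamma x y a *v v = 0}"
      by (metis (mono_tags) mem_Collect_eq matrix_vector_mul_assoc Zex2 matrix_vector_mult_0)
  qed
  have Zex3: "transpose (gamma x y a) ** transpose (eta x y a) = 0"
    by (simp add: eta_def gamma_def mat2_tr mat2_mult mat2_zero mat2_eq xy yx algebra_simps)
  have ex3: "exact_at (transpose (eta x y a)) (transpose (gamma x y a))"
    unfolding exact_at_def
  proof (intro conjI set_eqI iffI)
    show "transpose (gamma x y a) ** transpose (eta x y a) = 0" by (rule Zex3)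
  next
    fix v assume "v \<in> {v. transpose (gamma x y a) *v v = 0}"
    then have h1: "x * v$1 = 0" and h2: "a * v$1 + y * v$2 = 0"
      by (auto simp: gamma_def mat2_tr vec0_2 mat2_mv1 mat2_mv2)
    obtain w1 where w1: "v$1 = w1 * y" using ann_ex[OF E, of "v$1"] h1 by (auto simp: mult.commute)
    have "(v$2 + a * w1) * y = 0" using h2 w1 by (simp add: algebra_simps)
    then obtain w2 where w2: "v$2 + a * w1 = w2 * x" using ann_ey[OF E] by blast
    show "v \<in> range (\<lambda>w. transpose (eta x y a) *v w)" unfolding eta_def mat2_tr
      by (rule in_range2[of _ _ w1 _ w2]) (use w1 w2 in \<open>auto simp: algebra_simps\<close>)
  next
    fix v assume "v \<in> range (\<lambda>w. transpose (eta x y a) *v w)"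
    then obtain w where "v = transpose (eta x y a) *v w" by blast
    then show "v \<in> {v. transpose (gamma x y a) *v v = 0}"
      by (metis (mono_tags) mem_Collect_eq matrix_vector_mul_assoc Zex3 matrix_vector_mult_0)
  qed
  have Zex4: "transpose (eta x y a) ** transpose (gamma x y a) = 0"
    by (simp add: eta_def gamma_def mat2_tr mat2_mult mat2_zero mat2_eq xy yx algebra_simps)
  have ex4: "exact_at (transpose (gamma x y a)) (transpose (eta x y a))"
    unfolding exact_at_def
  proof (intro conjI set_eqI iffI)
    show "transpose (eta x y a) ** transpose (gamma x y a) = 0" by (rule Zex4)
  next
    fix v assume "v \<in> {v. transpose (eta x y a) *v v = 0}"
    then have h1: "y * v$1 = 0" and h2: "- (a * v$1) + x * v$2 = 0"
      by (auto simp: eta_def mat2_tr vec0_2 mat2_mv1 mat2_mv2)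
    obtain w1 where w1: "v$1 = w1 * x" using ann_ey[OF E, of "v$1"] h1 by (auto simp: mult.commute)
    have "(v$2 - a * w1) * x = 0" using h2 w1 by (simp add: algebra_simps)
    then obtain w2 where w2: "v$2 - a * w1 = w2 * y" using ann_ex[OF E] by blast
    show "v \<in> range (\<lambda>w. transpose (gamma x y a) *v w)" unfolding gamma_def mat2_tr
      by (rule in_range2[of _ _ w1 _ w2]) (use w1 w2 in \<open>auto simp: algebra_simps\<close>)
  next
    fix v assume "v \<in> range (\<lambda>w. transpose (gamma x y a) *v w)"
    then obtain w where "v = transpose (gamma x y a) *v w" by blast
    then show "v \<in> {v. transpose (eta x y a) *v v = 0}"
      by (metis (mono_tags) mem_Collect_eq matrix_vector_mul_assoc Zex4 matrix_vector_mult_0)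
  qed
  have c1: "phi ** transpose (gamma x y a) = eta x y a ** phi"
    by (simp add: phi_def eta_def gamma_def mat2_tr mat2_mult mat2_eq)
  have c2: "phi ** transpose (eta x y a) = gamma x y a ** phi"
    by (simp add: phi_def eta_def gamma_def mat2_tr mat2_mult mat2_eq)
  have inv: "invertible (phi :: 'a^2^2)"
    unfolding invertible_def
    by (rule exI[of _ "mat2 0 (-1) 1 0"]) (simp add: phi_def mat2_mult mat2_one mat2_eq)
  show ?thesis using ex1 ex2 ex3 ex4 c1 c2 inv by blast
qed

end
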